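(* For an integer $n\ge 3$, $$l_0^{(n-1)^3}(n^3)=\begin{cases}11, & n=3,\\ (n-1)^3+2, & n\ge 4.\end{cases}$$
   Context: For a positive integer $d$ and integer $m$, define $$u_0^d(m)=\binom{m-\lfloor \frac{d}{2}\rfloor -1}{\lfloor \frac{d-1}{2}\rfloor}+\binom{m-\lfloor \frac{d-1}{2}\rfloor -1}{\lfloor \frac{d}{2}\rfloor},$$ where $\binom{a}{b}=0$ when $a<b$; and for a number $x$, $l_0^d(x)=k$ if and only if $k$ is the integer with $u_0^d(k-1)<x\le u_0^d(k)$. *)

theory Defs
  imports Main
begin

text \<open>Binomial coefficient on integers with the convention binom a b = 0 when a < b
  (here b is always nonnegative).\<close>
definition binomz :: "int \<Rightarrow> int \<Rightarrow> int" where
  "binomz a b = (if a < b then 0 else int (nat a choose nat b))"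

definition u0 :: "nat \<Rightarrow> int \<Rightarrow> int" where
  "u0 d m = binomz (m - int (d div 2) - 1) (int ((d - 1) div 2))
          + binomz (m - int ((d - 1) div 2) - 1) (int (d div 2))"

definition l0 :: "nat \<Rightarrow> int \<Rightarrow> int" where
  "l0 d x = (THE k. u0 d (k - 1) < x \<and> x \<le> u0 d k)"

end

theory Submission
  imports Defs
begin

lemma binomz_nonneg: "0 \<le> binomz a b"
  by (simp add: binomz_def)

lemma binomz_mono: "0 \<le> b \<Longrightarrow> a \<le> a' \<Longrightarrow> binomz a b \<le> binomz a' b"
  unfolding binomz_def
  by (auto intro: binomial_right_mono simp: nat_mono)

lemma u0_mono: "m \<le> m' \<Longrightarrow> u0 d m \<le> u0 d m'"
  unfolding u0_def by (intro add_mono binomz_mono) auto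

lemma l0_eq:
  assumes "u0 d (k - 1) < x" "x \<le> u0 d k"
  shows "l0 d x = k"
  unfolding l0_def
proof (rule the1_equality)
  show "\<exists>!k. u0 d (k - 1) < x \<and> x \<le> u0 d k"
  proof (rule ex1I[of _ k])
    fix j assume j: "u0 d (j - 1) < x \<and> x \<le> u0 d j"
    show "j = k"
    proof (rule ccontr)
      assume "j \<noteq> k"
      then consider "j \<le> k - 1" | "k \<le> j - 1" by linarith
      then show False
      proof cases
        case 1 then have "u0 d j \<le> u0 d (k - 1)" by (rule u0_mono)
        with j assms show False by linarith
      next
        case 2 then have "u0 d k \<le> u0 d (j - 1)" by (rule u0_mono)
        with j assms show False by linarith
      qed
    qed
  qed (use assms in auto)
qed (use assms in auto)

lemma binomz_nat: "binomz (int p) (int q) = (if p < q then 0 else int (p choose q))"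
  by (simp add: binomz_def)

lemma u0_d1:
  assumes "d \<ge> 1"
  shows "u0 d (int d + 1) = int d + 1"
proof -
  define a where "a = d div 2"
  define b where "b = (d - 1) div 2"
  have d: "d = a + b + 1" using assms unfolding a_def b_def by presburger
  have 1: "int d + 1 - int a - 1 = int (b + 1)" using d by simp
  have 2: "int d + 1 - int b - 1 = int (a + 1)" using d by simp
  show ?thesis unfolding u0_def a_def[symmetric] b_def[symmetric] 1 2 binomz_nat
    using d by simp
qed

lemma aux_lin: "(x::nat) \<le> y \<Longrightarrow> y = 4 * B \<Longrightarrow> B \<le> 2 * X \<Longrightarrow> B \<le> 2 * Y \<Longrightarrow> x \<le> 4 * (X + Y)"
  by presburger

lemma u0_d2:
  assumes "d \<ge> 1"
  shows "4 * u0 d (int d + 2) \<ge> int d ^ 2"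
proof -
  define a where "a = d div 2"
  define b where "b = (d - 1) div 2"
  have d: "d = a + b + 1" using assms unfolding a_def b_def by presburger
  have ab: "b \<le> a" "d \<le> 2 * b + 2" unfolding a_def b_def by auto
  have 1: "int d + 2 - int a - 1 = int (b + 2)" using d by simp
  have 2: "int d + 2 - int b - 1 = int (a + 2)" using d by simp
  have c: "(k + 2) choose k = (k + 2) * (k + 1) div 2" for k :: nat
    using binomial_symmetric[of k "k+2"] choose_two[of "k+2"] by simp
  have c2: "2 * ((k + 2) choose k) = (k + 2) * (k + 1)" for k :: nat
  proof -
    have "even ((k + 2) * (k + 1))" by simp
    then show ?thesis unfolding c by simp
  qed
  have "u0 d (int d + 2) = int ((b + 2) choose b) + int ((a + 2) choose a)"
    unfolding u0_def a_def[symmetric] b_def[symmetric] 1 2 binomz_nat by simp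
  moreover have "(b + 1) * (b + 1) \<le> 2 * ((b + 2) choose b)"
    unfolding c2 by (intro mult_right_mono) auto
  moreover have "(b + 1) * (b + 1) \<le> 2 * ((a + 2) choose a)"
  proof -
    have "(b + 1) * (b + 1) \<le> (a + 1) * (a + 1)" using ab by (intro mult_mono) auto
    also have "\<dots> \<le> 2 * ((a + 2) choose a)" unfolding c2 by (intro mult_right_mono) auto
    finally show ?thesis .
  qed
  moreover have "d * d \<le> (2*b+2) * (2*b+2)" using ab by (intro mult_mono) auto
  moreover have "(2*b+2) * (2*b+2) = 4 * ((b + 1) * (b + 1))" by (simp add: algebra_simps)
  ultimately have "d * d \<le> 4 * (((b + 2) choose b) + ((a + 2) choose a))"
    using aux_lin by metis
  then have "int (d * d) \<le> int (4 * (((b + 2) choose b) + ((a + 2) choose a)))"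
    by (simp only: of_nat_le_iff)
  then show ?thesis using \<open>u0 d (int d + 2) = _\<close> unfolding power2_eq_square by simp
qed

lemma key_ineq:
  fixes m :: nat assumes "m \<ge> 3"
  shows "4 * (m + 1) ^ 3 \<le> (m ^ 3) ^ 2" "m ^ 3 + 1 < (m + 1) ^ 3"
proof -
  have "2 * (m + 1) \<le> m * m" using assms
  proof -
    have "3 * m \<le> m * m" using assms by (intro mult_right_mono) auto
    moreover have "2 * (m + 1) \<le> 3 * m" using assms by simp
    ultimately show ?thesis by (rule order_trans[rotated])
  qed
  then have "(2 * (m + 1)) ^ 3 \<le> (m * m) ^ 3" by (rule power_mono) simp
  then have "8 * (m + 1) ^ 3 \<le> (m ^ 3) ^ 2"
    by (simp add: power_mult_distrib power2_eq_square power3_eq_cube algebra_simps)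
  then show "4 * (m + 1) ^ 3 \<le> (m ^ 3) ^ 2" by linarith
  show "m ^ 3 + 1 < (m + 1) ^ 3" using assms
    by (simp add: power3_eq_cube algebra_simps)
qed

theorem corollary7:
  fixes n :: nat
  assumes "n \<ge> 3"
  shows "l0 ((n - 1) ^ 3) (int (n ^ 3)) =
           (if n = 3 then 11 else int ((n - 1) ^ 3) + 2)"
proof (cases "n = 3")
  case True
  have c: "(5::nat) choose 3 = 10" "(6::nat) choose 4 = 15" "(6::nat) choose 3 = 20" "(7::nat) choose 4 = 35"
    by (simp_all add: numeral_eq_Suc)
  have "l0 8 27 = 11"
    by (rule l0_eq) (simp_all add: u0_def binomz_def c)
  then show ?thesis using True by simp
next
  case False
  define m where "m = n - 1"
  have m: "m \<ge> 3" "n = m + 1" using False assms unfolding m_def by auto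
  define d where "d = m ^ 3"
  have d1: "d \<ge> 1" using m unfolding d_def by simp
  have n1: "4 * n ^ 3 \<le> d ^ 2" "d + 1 < n ^ 3"
    using key_ineq[OF m(1)] unfolding d_def m(2) by simp_all
  have i1: "4 * int n ^ 3 \<le> int d ^ 2" "int d + 1 < int n ^ 3"
  proof -
    have "int (4 * n ^ 3) \<le> int (d ^ 2)" "int (d + 1) < int (n ^ 3)"
      using n1 by (simp_all only: of_nat_le_iff of_nat_less_iff)
    then show "4 * int n ^ 3 \<le> int d ^ 2" "int d + 1 < int n ^ 3" by simp_all
  qed
  have "l0 d (int (n ^ 3)) = int d + 2"
  proof (rule l0_eq)
    show "u0 d (int d + 2 - 1) < int (n ^ 3)"
      using u0_d1[OF d1] i1 by (simp add: algebra_simps)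
    show "int (n ^ 3) \<le> u0 d (int d + 2)"
      using u0_d2[OF d1] i1 by simp
  qed
  then show ?thesis using False unfolding d_def m_def by simp
qed

end
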